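(* Let $G$ be a neighborhood unit square graph with $V(G)\neq\emptyset$. Let $X$ be the set of vertices $v\in V(G)$ for which there exist vertices $w_1,\dots,w_6\in V(G)\setminus\{v\}$ with $vw_i\notin E(G)$ for all $i\in[6]$ and $G[\{w_1,\dots,w_6\}]\cong S_3$. Then $X\ne V(G)$.
   Context: A neighborhood unit square graph is a graph $G$ admitting a map $f\colon V(G)\to[-1,1]^2$ such that for distinct $v,w$, $vw\in E(G)$ iff $\|f(v)-f(w)\|_\infty\le1$. $S_3$ (the 3-sun) is the graph on $w_1,\dots,w_6$ with edges $w_4w_5,w_5w_6,w_4w_6$ (a triangle), $w_1w_4,w_1w_6$, $w_2w_4,w_2w_5$, $w_3w_5,w_3w_6$. *)

theory Defs
  imports Main "HOL-Analysis.Analysis"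
begin

definition simple_graph :: "'a set \<Rightarrow> ('a \<Rightarrow> 'a \<Rightarrow> bool) \<Rightarrow> bool" where
  "simple_graph V E \<longleftrightarrow> finite V \<and> (\<forall>u v. E u v \<longrightarrow> u \<in> V \<and> v \<in> V)
     \<and> (\<forall>u v. E u v \<longrightarrow> E v u) \<and> (\<forall>v. \<not> E v v)"

definition linf_dist :: "real \<times> real \<Rightarrow> real \<times> real \<Rightarrow> real" where
  "linf_dist p q = max \<bar>fst p - fst q\<bar> \<bar>snd p - snd q\<bar>"

definition nusg :: "'a set \<Rightarrow> ('a \<Rightarrow> 'a \<Rightarrow> bool) \<Rightarrow> bool" where
  "nusg V E \<longleftrightarrow> simple_graph V E \<and>
     (\<exists>f :: 'a \<Rightarrow> real \<times> real.
        (\<forall>v\<in>V. \<bar>fst (f v)\<bar> \<le> 1 \<and> \<bar>snd (f v)\<bar> \<le> 1) \<and>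
        (\<forall>v\<in>V. \<forall>w\<in>V. v \<noteq> w \<longrightarrow> (E v w \<longleftrightarrow> linf_dist (f v) (f w) \<le> 1)))"

text \<open>Edges of the 3-sun S_3 on vertices 1..6: triangle 4,5,6; 1-4,1-6; 2-4,2-5; 3-5,3-6.\<close>
definition sun3_edges :: "(nat \<times> nat) set" where
  "sun3_edges = {(4,5),(5,6),(4,6),(1,4),(1,6),(2,4),(2,5),(3,5),(3,6)}"

definition sun3_adj :: "nat \<Rightarrow> nat \<Rightarrow> bool" where
  "sun3_adj i j \<longleftrightarrow> (i, j) \<in> sun3_edges \<or> (j, i) \<in> sun3_edges"

definition induces_sun3 :: "('a \<Rightarrow> 'a \<Rightarrow> bool) \<Rightarrow> (nat \<Rightarrow> 'a) \<Rightarrow> bool" where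
  "induces_sun3 E w \<longleftrightarrow> inj_on w {1..6} \<and>
     (\<forall>i\<in>{1..6}. \<forall>j\<in>{1..6}. E (w i) (w j) \<longleftrightarrow> sun3_adj i j)"

definition sun3_far_set :: "'a set \<Rightarrow> ('a \<Rightarrow> 'a \<Rightarrow> bool) \<Rightarrow> 'a set" where
  "sun3_far_set V E = {v \<in> V. \<exists>w :: nat \<Rightarrow> 'a.
      (\<forall>i\<in>{1..6}. w i \<in> V - {v} \<and> \<not> E v (w i)) \<and> induces_sun3 E w}"

end

theory Submission
  imports Defs
begin

lemma core:
  fixes a b x1 x2 x3 x4 x5 x6 y1 y2 y3 y4 y5 y6 :: real
  assumes "\<bar>a\<bar> \<le> 1" "\<bar>b\<bar> \<le> 1"
  "\<bar>x1\<bar> \<le> 1" "\<bar>x2\<bar> \<le> 1" "\<bar>x3\<bar> \<le> 1" "\<bar>x4\<bar> \<le> 1" "\<bar>x5\<bar> \<le> 1" "\<bar>x6\<bar> \<le> 1"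
  "\<bar>y1\<bar> \<le> 1" "\<bar>y2\<bar> \<le> 1" "\<bar>y3\<bar> \<le> 1" "\<bar>y4\<bar> \<le> 1" "\<bar>y5\<bar> \<le> 1" "\<bar>y6\<bar> \<le> 1"
  "\<bar>a\<bar> \<le> \<bar>x1\<bar>" "\<bar>a\<bar> \<le> \<bar>x2\<bar>" "\<bar>a\<bar> \<le> \<bar>x3\<bar>" "\<bar>a\<bar> \<le> \<bar>x4\<bar>" "\<bar>a\<bar> \<le> \<bar>x5\<bar>" "\<bar>a\<bar> \<le> \<bar>x6\<bar>"
  "max \<bar>a - x1\<bar> \<bar>b - y1\<bar> > 1" "max \<bar>a - x2\<bar> \<bar>b - y2\<bar> > 1" "max \<bar>a - x3\<bar> \<bar>b - y3\<bar> > 1"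
  "max \<bar>a - x4\<bar> \<bar>b - y4\<bar> > 1" "max \<bar>a - x5\<bar> \<bar>b - y5\<bar> > 1" "max \<bar>a - x6\<bar> \<bar>b - y6\<bar> > 1"
  "max \<bar>x4 - x5\<bar> \<bar>y4 - y5\<bar> \<le> 1" "max \<bar>x5 - x6\<bar> \<bar>y5 - y6\<bar> \<le> 1" "max \<bar>x4 - x6\<bar> \<bar>y4 - y6\<bar> \<le> 1"
  "max \<bar>x1 - x4\<bar> \<bar>y1 - y4\<bar> \<le> 1" "max \<bar>x1 - x6\<bar> \<bar>y1 - y6\<bar> \<le> 1"
  "max \<bar>x2 - x4\<bar> \<bar>y2 - y4\<bar> \<le> 1" "max \<bar>x2 - x5\<bar> \<bar>y2 - y5\<bar> \<le> 1"
  "max \<bar>x3 - x5\<bar> \<bar>y3 - y5\<bar> \<le> 1" "max \<bar>x3 - x6\<bar> \<bar>y3 - y6\<bar> \<le> 1"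
  "max \<bar>x1 - x2\<bar> \<bar>y1 - y2\<bar> > 1" "max \<bar>x1 - x3\<bar> \<bar>y1 - y3\<bar> > 1" "max \<bar>x2 - x3\<bar> \<bar>y2 - y3\<bar> > 1"
  "max \<bar>x1 - x5\<bar> \<bar>y1 - y5\<bar> > 1" "max \<bar>x2 - x6\<bar> \<bar>y2 - y6\<bar> > 1" "max \<bar>x3 - x4\<bar> \<bar>y3 - y4\<bar> > 1"
  shows False
  using assms by (smt (verit))

theorem mainTheorem19:
  fixes V :: "'a set" and E :: "'a \<Rightarrow> 'a \<Rightarrow> bool"
  assumes "nusg V E" and "V \<noteq> {}"
  shows "sun3_far_set V E \<noteq> V"
proof
  assume XV: "sun3_far_set V E = V"
  from assms(1) have sg: "simple_graph V E" unfolding nusg_def by blast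
  then have fin: "finite V" unfolding simple_graph_def by blast
  from assms(1) have "\<exists>f :: 'a \<Rightarrow> real \<times> real.
        (\<forall>v\<in>V. \<bar>fst (f v)\<bar> \<le> 1 \<and> \<bar>snd (f v)\<bar> \<le> 1) \<and>
        (\<forall>v\<in>V. \<forall>w\<in>V. v \<noteq> w \<longrightarrow> (E v w \<longleftrightarrow> linf_dist (f v) (f w) \<le> 1))"
    unfolding nusg_def by (rule conjunct2)
  then obtain f :: "'a \<Rightarrow> real \<times> real" where
    ff: "(\<forall>v\<in>V. \<bar>fst (f v)\<bar> \<le> 1 \<and> \<bar>snd (f v)\<bar> \<le> 1) \<and>
        (\<forall>v\<in>V. \<forall>w\<in>V. v \<noteq> w \<longrightarrow> (E v w \<longleftrightarrow> linf_dist (f v) (f w) \<le> 1))"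
    by (rule exE)
  note fb = conjunct1[OF ff] and fe = conjunct2[OF ff]
  define g where "g u = \<bar>fst (f u)\<bar>" for u
  have "Min (g ` V) \<in> g ` V" using fin assms(2) by (intro Min_in) auto
  then obtain v where vV: "v \<in> V" and vmin: "g v = Min (g ` V)" by auto
  have vm: "\<And>u. u \<in> V \<Longrightarrow> g v \<le> g u" using fin vmin by simp
  from vV XV have "v \<in> sun3_far_set V E" by simp
  then obtain w where w1: "\<forall>i\<in>{1..6}. w i \<in> V - {v} \<and> \<not> E v (w i)" and ws: "induces_sun3 E w"
    unfolding sun3_far_set_def by blast
  from ws have inj: "inj_on w {1..6}" and wa: "\<forall>i\<in>{1..6}. \<forall>j\<in>{1..6}. E (w i) (w j) \<longleftrightarrow> sun3_adj i j"
    unfolding induces_sun3_def by auto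
  have nv: "linf_dist (f v) (f (w i)) > 1" if "i \<in> {1..6}" for i
    using w1 that fe vV by force
  have wV: "w i \<in> V" if "i \<in> {1..6}" for i using w1 that by blast
  have ad: "sun3_adj i j \<longleftrightarrow> linf_dist (f (w i)) (f (w j)) \<le> 1"
    if "i \<in> {1..6}" "j \<in> {1..6}" "i \<noteq> j" for i j
  proof -
    have "w i \<noteq> w j" using inj that unfolding inj_on_def by blast
    then show ?thesis using wa fe wV that by metis
  qed
  have S: "{1..6::nat} = {1,2,3,4,5,6}" by auto
  have b1: "\<bar>fst (f (w 1))\<bar> \<le> 1" "\<bar>snd (f (w 1))\<bar> \<le> 1" using fb wV[of 1] by auto
  have m1: "\<bar>fst (f v)\<bar> \<le> \<bar>fst (f (w 1))\<bar>" using vm[OF wV[of 1]] by (simp add: g_def)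
  have n1: "max \<bar>fst (f v) - fst (f (w 1))\<bar> \<bar>snd (f v) - snd (f (w 1))\<bar> > 1" using nv[of 1] by (simp add: linf_dist_def)
  have b2: "\<bar>fst (f (w 2))\<bar> \<le> 1" "\<bar>snd (f (w 2))\<bar> \<le> 1" using fb wV[of 2] by auto
  have m2: "\<bar>fst (f v)\<bar> \<le> \<bar>fst (f (w 2))\<bar>" using vm[OF wV[of 2]] by (simp add: g_def)
  have n2: "max \<bar>fst (f v) - fst (f (w 2))\<bar> \<bar>snd (f v) - snd (f (w 2))\<bar> > 1" using nv[of 2] by (simp add: linf_dist_def)
  have b3: "\<bar>fst (f (w 3))\<bar> \<le> 1" "\<bar>snd (f (w 3))\<bar> \<le> 1" using fb wV[of 3] by auto
  have m3: "\<bar>fst (f v)\<bar> \<le> \<bar>fst (f (w 3))\<bar>" using vm[OF wV[of 3]] by (simp add: g_def)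
  have n3: "max \<bar>fst (f v) - fst (f (w 3))\<bar> \<bar>snd (f v) - snd (f (w 3))\<bar> > 1" using nv[of 3] by (simp add: linf_dist_def)
  have b4: "\<bar>fst (f (w 4))\<bar> \<le> 1" "\<bar>snd (f (w 4))\<bar> \<le> 1" using fb wV[of 4] by auto
  have m4: "\<bar>fst (f v)\<bar> \<le> \<bar>fst (f (w 4))\<bar>" using vm[OF wV[of 4]] by (simp add: g_def)
  have n4: "max \<bar>fst (f v) - fst (f (w 4))\<bar> \<bar>snd (f v) - snd (f (w 4))\<bar> > 1" using nv[of 4] by (simp add: linf_dist_def)
  have b5: "\<bar>fst (f (w 5))\<bar> \<le> 1" "\<bar>snd (f (w 5))\<bar> \<le> 1" using fb wV[of 5] by auto
  have m5: "\<bar>fst (f v)\<bar> \<le> \<bar>fst (f (w 5))\<bar>" using vm[OF wV[of 5]] by (simp add: g_def)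
  have n5: "max \<bar>fst (f v) - fst (f (w 5))\<bar> \<bar>snd (f v) - snd (f (w 5))\<bar> > 1" using nv[of 5] by (simp add: linf_dist_def)
  have b6: "\<bar>fst (f (w 6))\<bar> \<le> 1" "\<bar>snd (f (w 6))\<bar> \<le> 1" using fb wV[of 6] by auto
  have m6: "\<bar>fst (f v)\<bar> \<le> \<bar>fst (f (w 6))\<bar>" using vm[OF wV[of 6]] by (simp add: g_def)
  have n6: "max \<bar>fst (f v) - fst (f (w 6))\<bar> \<bar>snd (f v) - snd (f (w 6))\<bar> > 1" using nv[of 6] by (simp add: linf_dist_def)
  have e45: "max \<bar>fst (f (w 4)) - fst (f (w 5))\<bar> \<bar>snd (f (w 4)) - snd (f (w 5))\<bar> \<le> 1" using ad[of 4 5] by (simp add: linf_dist_def sun3_adj_def sun3_edges_def)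
  have e56: "max \<bar>fst (f (w 5)) - fst (f (w 6))\<bar> \<bar>snd (f (w 5)) - snd (f (w 6))\<bar> \<le> 1" using ad[of 5 6] by (simp add: linf_dist_def sun3_adj_def sun3_edges_def)
  have e46: "max \<bar>fst (f (w 4)) - fst (f (w 6))\<bar> \<bar>snd (f (w 4)) - snd (f (w 6))\<bar> \<le> 1" using ad[of 4 6] by (simp add: linf_dist_def sun3_adj_def sun3_edges_def)
  have e14: "max \<bar>fst (f (w 1)) - fst (f (w 4))\<bar> \<bar>snd (f (w 1)) - snd (f (w 4))\<bar> \<le> 1" using ad[of 1 4] by (simp add: linf_dist_def sun3_adj_def sun3_edges_def)
  have e16: "max \<bar>fst (f (w 1)) - fst (f (w 6))\<bar> \<bar>snd (f (w 1)) - snd (f (w 6))\<bar> \<le> 1" using ad[of 1 6] by (simp add: linf_dist_def sun3_adj_def sun3_edges_def)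
  have e24: "max \<bar>fst (f (w 2)) - fst (f (w 4))\<bar> \<bar>snd (f (w 2)) - snd (f (w 4))\<bar> \<le> 1" using ad[of 2 4] by (simp add: linf_dist_def sun3_adj_def sun3_edges_def)
  have e25: "max \<bar>fst (f (w 2)) - fst (f (w 5))\<bar> \<bar>snd (f (w 2)) - snd (f (w 5))\<bar> \<le> 1" using ad[of 2 5] by (simp add: linf_dist_def sun3_adj_def sun3_edges_def)
  have e35: "max \<bar>fst (f (w 3)) - fst (f (w 5))\<bar> \<bar>snd (f (w 3)) - snd (f (w 5))\<bar> \<le> 1" using ad[of 3 5] by (simp add: linf_dist_def sun3_adj_def sun3_edges_def)
  have e36: "max \<bar>fst (f (w 3)) - fst (f (w 6))\<bar> \<bar>snd (f (w 3)) - snd (f (w 6))\<bar> \<le> 1" using ad[of 3 6] by (simp add: linf_dist_def sun3_adj_def sun3_edges_def)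
  have e12: "max \<bar>fst (f (w 1)) - fst (f (w 2))\<bar> \<bar>snd (f (w 1)) - snd (f (w 2))\<bar> > 1" using ad[of 1 2] by (simp add: linf_dist_def sun3_adj_def sun3_edges_def not_le less_max_iff_disj)
  have e13: "max \<bar>fst (f (w 1)) - fst (f (w 3))\<bar> \<bar>snd (f (w 1)) - snd (f (w 3))\<bar> > 1" using ad[of 1 3] by (simp add: linf_dist_def sun3_adj_def sun3_edges_def not_le less_max_iff_disj)
  have e23: "max \<bar>fst (f (w 2)) - fst (f (w 3))\<bar> \<bar>snd (f (w 2)) - snd (f (w 3))\<bar> > 1" using ad[of 2 3] by (simp add: linf_dist_def sun3_adj_def sun3_edges_def not_le less_max_iff_disj)
  have e15: "max \<bar>fst (f (w 1)) - fst (f (w 5))\<bar> \<bar>snd (f (w 1)) - snd (f (w 5))\<bar> > 1" using ad[of 1 5] by (simp add: linf_dist_def sun3_adj_def sun3_edges_def not_le less_max_iff_disj)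
  have e26: "max \<bar>fst (f (w 2)) - fst (f (w 6))\<bar> \<bar>snd (f (w 2)) - snd (f (w 6))\<bar> > 1" using ad[of 2 6] by (simp add: linf_dist_def sun3_adj_def sun3_edges_def not_le less_max_iff_disj)
  have e34: "max \<bar>fst (f (w 3)) - fst (f (w 4))\<bar> \<bar>snd (f (w 3)) - snd (f (w 4))\<bar> > 1" using ad[of 3 4] by (simp add: linf_dist_def sun3_adj_def sun3_edges_def not_le less_max_iff_disj)
  have va: "\<bar>fst (f v)\<bar> \<le> 1" "\<bar>snd (f v)\<bar> \<le> 1" using fb vV by auto
  show False using core[OF va b1(1) b2(1) b3(1) b4(1) b5(1) b6(1) b1(2) b2(2) b3(2) b4(2) b5(2) b6(2) m1 m2 m3 m4 m5 m6 n1 n2 n3 n4 n5 n6 e45 e56 e46 e14 e16 e24 e25 e35 e36 e12 e13 e23 e15 e26 e34] .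
qed

end
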